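(* Fix $\gamma\in\mathbb{R}$ and $\alpha\in\mathbb{R}$, and set $\beta=\alpha$. Let $\bm{u}_\gamma=(\sin\gamma,0,\cos\gamma)$ and $\hat{\bm z}=(0,0,1)$. For a unit vector $\bm u$ and angle $\theta$ let $\bm q(\bm u,\theta)=\{\cos(\theta/2),\ \sin(\theta/2)\,\bm u\}$ denote the unit quaternion representing rotation by $\theta$ about $\bm u$, and define the quaternions (Hamilton product) \[ \bm Q^{(1)}=\bm q(\bm u_\gamma,\beta)\,\bm q(\hat{\bm z},\alpha),\qquad \bm Q^{(4)}=\bm q(\bm u_\gamma,\beta+\pi)\,\bm q(\hat{\bm z},\alpha+\pi), \] (representing the rotations $R_1=R^{\bm u_\gamma}_\beta R^z_\alpha$ and $R_4=R^{\bm u_\gamma}_{\beta+\pi}R^z_{\alpha+\pi}$). For an integer $j\ge 1$ let $\bm q^{(j)}=(\bm Q^{(1)})^j\bm Q^{(4)}=\{q^{(j)}_1,q^{(j)}_2,q^{(j)}_3,q^{(j)}_4\}$ and define $\theta_{41^j}(\alpha,\gamma)=2\arccos q^{(j)}_1$. Then for every $j\ge 1$, if \[ \cos\left(\frac{\gamma}{2}\right)\sin\left(\frac{\alpha}{2}\right)=\sin\left(\frac{\pi}{2(2j+1)}\right)=\cos\left(\frac{j\pi}{2j+1}\right), \] then $\theta_{41^j}(\alpha,\gamma)=\dfrac{2j\pi}{2j+1}$.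
   Context: Setting: a piecewise isometry on the lower unit hemispherical shell obtained by rotating by $\alpha$ about the horizontal $z$-axis and then by $\beta$ about a second horizontal axis $\bm u_\gamma$ making angle $\gamma$ with the first, with points crossing the equator rotated by an extra $\pi$. On atom $P_1$ the map acts as the rotation $R_1$ and on atom $P_4$ as $R_4$; the itinerary $41^j$ (one visit to $P_4$ followed by $j$ visits to $P_1$) produces the net rotation $R_1^j R_4$ (rightmost applied first), whose quaternion is $\bm q^{(j)}$, and $\theta_{41^j}$ is the corresponding internal rotation angle of the cell with that itinerary. $R^{\bm a}_\theta$ denotes rotation by $\theta$ about axis $\bm a$. *)

theory Defs
  imports "HOL-Analysis.Analysis"
begin

text \<open>Quaternions represented as 4-tuples (scalar part, vector part x, y, z).\<close>
type_synonym quat = "real \<times> real \<times> real \<times> real"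

definition qmul :: "quat \<Rightarrow> quat \<Rightarrow> quat" where
  "qmul p q = (case p of (a1, b1, c1, d1) \<Rightarrow> case q of (a2, b2, c2, d2) \<Rightarrow>
     (a1*a2 - b1*b2 - c1*c2 - d1*d2,
      a1*b2 + b1*a2 + c1*d2 - d1*c2,
      a1*c2 - b1*d2 + c1*a2 + d1*b2,
      a1*d2 + b1*c2 - c1*b2 + d1*a2))"

definition qone :: quat where "qone = (1, 0, 0, 0)"

fun qpow :: "quat \<Rightarrow> nat \<Rightarrow> quat" where
  "qpow q 0 = qone"
| "qpow q (Suc n) = qmul q (qpow q n)"

definition rotq :: "real \<times> real \<times> real \<Rightarrow> real \<Rightarrow> quat" where
  "rotq u \<theta> = (case u of (u1, u2, u3) \<Rightarrow>
     (cos (\<theta>/2), sin (\<theta>/2) * u1, sin (\<theta>/2) * u2, sin (\<theta>/2) * u3))"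

definition u_gamma :: "real \<Rightarrow> real \<times> real \<times> real" where
  "u_gamma \<gamma> = (sin \<gamma>, 0, cos \<gamma>)"

definition z_hat :: "real \<times> real \<times> real" where
  "z_hat = (0, 0, 1)"

definition Q1 :: "real \<Rightarrow> real \<Rightarrow> real \<Rightarrow> quat" where
  "Q1 \<alpha> \<beta> \<gamma> = qmul (rotq (u_gamma \<gamma>) \<beta>) (rotq z_hat \<alpha>)"

definition Q4 :: "real \<Rightarrow> real \<Rightarrow> real \<Rightarrow> quat" where
  "Q4 \<alpha> \<beta> \<gamma> = qmul (rotq (u_gamma \<gamma>) (\<beta> + pi)) (rotq z_hat (\<alpha> + pi))"

definition q_itin :: "nat \<Rightarrow> real \<Rightarrow> real \<Rightarrow> quat" where
  "q_itin j \<alpha> \<gamma> = qmul (qpow (Q1 \<alpha> \<alpha> \<gamma>) j) (Q4 \<alpha> \<alpha> \<gamma>)"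

definition theta_41j :: "nat \<Rightarrow> real \<Rightarrow> real \<Rightarrow> real" where
  "theta_41j j \<alpha> \<gamma> = 2 * arccos (fst (q_itin j \<alpha> \<gamma>))"

end

theory Submission
  imports Defs
begin

lemma qpow_formula:
  fixes a v1 v2 v3 h :: real
  assumes "a = cos h" "v1^2+v2^2+v3^2 = (sin h)^2" "sin h \<noteq> 0"
  shows "qpow (a,v1,v2,v3) n = (cos (real n * h), sin (real n*h)/sin h * v1,
            sin (real n*h)/sin h * v2, sin (real n*h)/sin h * v3)"
proof (induction n)
  case 0
  then show ?case by (simp add: qone_def)
next
  case (Suc n)
  let ?t = "sin (real n*h)/sin h"
  have e1: "cos h * cos (real n * h) - ?t * (v1^2+v2^2+v3^2) = cos (real (Suc n) * h)"
    using assms by (simp add: distrib_right cos_add power2_eq_square algebra_simps)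
  have e2: "cos h * ?t + cos (real n * h) = sin (real (Suc n) * h)/sin h"
    using assms by (simp add: distrib_right sin_add field_simps)
  show ?case
    using Suc.IH e1 e2 assms(1) assms(3)
    by (simp add: qmul_def field_simps) (simp add: distrib_left[symmetric] power2_eq_square)
qed

theorem proposition1:
  fixes \<alpha> \<gamma> :: real and j :: nat
  assumes "j \<ge> 1"
    and "cos (\<gamma>/2) * sin (\<alpha>/2) = sin (pi / (2 * (2 * real j + 1)))"
    and "sin (pi / (2 * (2 * real j + 1))) = cos (real j * pi / (2 * real j + 1))"
  shows "theta_41j j \<alpha> \<gamma> = 2 * real j * pi / (2 * real j + 1)"
proof -
  define h where "h = pi / (2 * real j + 1)"
  define c where "c = cos (\<alpha>/2)"
  define s where "s = sin (\<alpha>/2)"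
  define k where "k = cos (\<gamma>/2)"
  define l where "l = sin (\<gamma>/2)"
  have hpos: "0 < h" using pi_gt_zero unfolding h_def by simp
  have hle: "h/2 < pi/2" using pi_gt_zero assms(1) unfolding h_def by (simp add: field_simps)
  have jh: "real j * h = pi/2 - h/2" unfolding h_def by (simp add: field_simps)
  have sh2: "sin (h/2) > 0" using hpos hle by (intro sin_gt_zero) auto
  have ch2: "cos (h/2) > 0" using hpos hle by (intro cos_gt_zero) auto
  have cjh: "cos (real j * h) = sin (h/2)" using jh by (simp add: cos_diff)
  have sjh: "sin (real j * h) = cos (h/2)" using jh by (simp add: sin_diff)
  have sh: "sin h = 2 * sin (h/2) * cos (h/2)" using sin_double[of "h/2"] by simp
  have chh: "cos h = 1 - 2 * (sin (h/2))^2" using cos_double_sin[of "h/2"] by simp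
  have sig: "k * s = sin (h/2)" using assms(2) unfolding k_def s_def h_def by (simp add: field_simps)
  have cs1: "c^2 + s^2 = 1" unfolding c_def s_def by simp
  have kl1: "k^2 + l^2 = 1" unfolding k_def l_def by simp
  have cg: "cos \<gamma> = 2 * k^2 - 1" using cos_double_cos[of "\<gamma>/2"] unfolding k_def by simp
  have sg: "sin \<gamma> = 2 * l * k" using sin_double[of "\<gamma>/2"] unfolding k_def l_def by simp
  have ca: "cos ((\<alpha>+pi)/2) = - s" unfolding s_def
    by (simp add: add_divide_distrib cos_add)
  have sa: "sin ((\<alpha>+pi)/2) = c" unfolding c_def
    by (simp add: add_divide_distrib sin_add)
  have Q1e: "Q1 \<alpha> \<alpha> \<gamma> = (c * c - s * s * cos \<gamma>, c * s * sin \<gamma>, - s * s * sin \<gamma>, c * s + s * c * cos \<gamma>)"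
    unfolding Q1_def qmul_def rotq_def u_gamma_def z_hat_def c_def s_def by simp
  have Q4e: "Q4 \<alpha> \<alpha> \<gamma> = (s * s - c * c * cos \<gamma>, -s * c * sin \<gamma>, - c * c * sin \<gamma>, -s * c - c * s * cos \<gamma>)"
    unfolding Q4_def qmul_def rotq_def u_gamma_def z_hat_def using ca sa by simp
  have a1: "c * c - s * s * cos \<gamma> = cos h"
  proof -
    have "cos h = 1 - 2 * (k * s)^2" using chh sig by simp
    then show ?thesis using cs1 cg by algebra
  qed
  have n1: "(c * s * sin \<gamma>)^2 + (- s * s * sin \<gamma>)^2 + (c * s + s * c * cos \<gamma>)^2 = (sin h)^2"
  proof -
    have "(sin h)^2 = 1 - (cos h)^2" by (simp add: sin_squared_eq)
    also have "\<dots> = 1 - (c * c - s * s * cos \<gamma>)^2" using a1 by simp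
    finally show ?thesis using cs1 kl1 cg sg
      by (simp add: power2_eq_square) algebra
  qed
  have shnz: "sin h \<noteq> 0" using sh sh2 ch2 by simp
  have P: "qpow (Q1 \<alpha> \<alpha> \<gamma>) j = (cos (real j * h), sin (real j * h) / sin h * (c * s * sin \<gamma>),
            sin (real j * h) / sin h * (- s * s * sin \<gamma>), sin (real j * h) / sin h * (c * s + s * c * cos \<gamma>))"
    unfolding Q1e by (rule qpow_formula[OF a1 n1 shnz])
  have fst: "fst (q_itin j \<alpha> \<gamma>) = cos (real j * h)"
  proof -
    have "fst (q_itin j \<alpha> \<gamma>) = sin (h/2) * (s * s - c * c * cos \<gamma>)
       - cos (h/2) / (2 * sin (h/2) * cos (h/2)) *
         ((c * s * sin \<gamma>)*(-s * c * sin \<gamma>) + (- s * s * sin \<gamma>)*(- c * c * sin \<gamma>)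
          + (c * s + s * c * cos \<gamma>)*(-s * c - c * s * cos \<gamma>))"
      unfolding q_itin_def P Q4e qmul_def using cjh sjh sh by (simp add: algebra_simps)
    also have "\<dots> = sin (h/2) * (s * s - c * c * cos \<gamma>)
       + (c * s*(1 + cos \<gamma>))^2 / (2 * sin (h/2))"
      using ch2 sh2 by (simp add: field_simps power2_eq_square)
    also have "\<dots> = sin (h/2)"
      using sh2 cs1 cg sig[symmetric] by (simp add: field_simps power2_eq_square) algebra
    finally show ?thesis using cjh by simp
  qed
  have "arccos (cos (real j * h)) = real j * h"
    using jh hpos hle pi_gt_zero by (intro arccos_cos) auto
  then show ?thesis unfolding theta_41j_def fst h_def by simp
qed

end
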